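(* Let $G=\langle A\cup B\rangle$ be a CS group and let $g\in G$. Then: (1) $\mathrm{syl}(g|_x)\le \tfrac12(\mathrm{syl}(g)+1)$ for all $x\in X$; (2) $\sum_{x\in X}\mathrm{syl}(g|_x)\le \mathrm{syl}(g)$; (3) $\mathrm{syl}(g\|_x)\le\mathrm{syl}(g)$ for all $x\in X$ with $\ell_g(x)<\infty$; (4) if the permutation $g|^\epsilon$ has finite order, then $g\|_x\in A$ for all but finitely many $x\in X$.
   Context: Let $X$ be a nonempty set (possibly infinite) with a distinguished letter $0\in X$, and $\dot X=X\setminus\{0\}$. $X^*$ is the free monoid on $X$ (concatenation $u\star v$, empty word $\epsilon$), viewed as a regular rooted tree; $X^n$ is the $n$-th layer. $\mathrm{Aut}(X^* )$ is the group of root-fixing tree automorphisms, acting on the right ($v\mapsto v.g$; $gh$ = first $g$ then $h$); conjugation is ${}^hg=hgh^{-1}$. The section $g|_u$ is defined by $(u\star v).g=u.g\star v.(g|_u)$ for all $v$; $g|^\epsilon\in\mathrm{Sym}(X)$ is the permutation induced by $g$ on $X^1=X$. Elements $\rho\in\mathrm{Sym}(X)$ are identified with rooted automorphisms $(x\star v).\rho=x.\rho\star v$. $\mathrm{St}(1)$ is the stabiliser of all vertices of $X^1$. For a vertex $v$, $\ell_g(v)$ is the length of the $\langle g\rangle$-orbit of $v$; if finite, $g\|_v:=g^{\ell_g(v)}|_v$ (stabilised section). A constant spinal (CS) group is $G=\langle A\cup B\rangle\le\mathrm{Aut}(X^* )$, where $A\le\mathrm{Sym}(X)$ is a transitive permutation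 group (the rooted group, embedded as rooted automorphisms) and $B\le\mathrm{St}(1)$ is a subgroup (the directed group) such that $b|_0=b$ for all $b\in B$ and the elements $b|_x$ ($b\in B$, $x\in\dot X$) lie in $A$ and generate $A$. Every $g\in G$ can be written $g=({}^{a_0}b_0)({}^{a_1}b_1)\cdots({}^{a_{n-1}}b_{n-1})a_n$ with $a_i\in A$, $b_i\in B$, $n\in\mathbb N$; the syllable length $\mathrm{syl}(g)$ is the least such $n$. *)

theory Defs
  imports "HOL-Algebra.Algebra"
begin

text \<open>Vertices of the tree X^* are lists over the type 'a (X = UNIV).
  Automorphisms act on the right: v.g is written g v; the product gh
  (first g, then h) is the function composition h o g.\<close>

definition tree_aut :: "('a list \<Rightarrow> 'a list) set" where
  "tree_aut = {f. bij f \<and> (\<forall>u. length (f u) = length u)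
                 \<and> (\<forall>u v. take (length u) (f (u @ v)) = f u)}"

definition Aut_grp :: "('a list \<Rightarrow> 'a list) monoid" where
  "Aut_grp = \<lparr>carrier = tree_aut, monoid.mult = (\<lambda>g h. h \<circ> g), one = id\<rparr>"

definition Sym_grp :: "('a \<Rightarrow> 'a) monoid" where
  "Sym_grp = \<lparr>carrier = {p. bij p}, monoid.mult = (\<lambda>p q. q \<circ> p), one = id\<rparr>"

fun rooted :: "('a \<Rightarrow> 'a) \<Rightarrow> 'a list \<Rightarrow> 'a list" where
  "rooted \<rho> [] = []"
| "rooted \<rho> (x # v) = \<rho> x # v"

text \<open>section g|_u : (u @ v).g = u.g @ v.(g|_u)\<close>
definition sec :: "('a list \<Rightarrow> 'a list) \<Rightarrow> 'a list \<Rightarrow> 'a list \<Rightarrow> 'a list" where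
  "sec g u = (\<lambda>v. drop (length u) (g (u @ v)))"

definition top_perm :: "('a list \<Rightarrow> 'a list) \<Rightarrow> 'a \<Rightarrow> 'a" where
  "top_perm g = (\<lambda>x. hd (g [x]))"

definition St1 :: "('a list \<Rightarrow> 'a list) set" where
  "St1 = {g \<in> tree_aut. \<forall>x. g [x] = [x]}"

text \<open>orbit of v under <g>; for a bijection the forward orbit is finite
  iff the full orbit is finite, and then they coincide\<close>
definition orb :: "('a list \<Rightarrow> 'a list) \<Rightarrow> 'a list \<Rightarrow> 'a list set" where
  "orb g v = {(g ^^ n) v | n. True}"

definition orb_len :: "('a list \<Rightarrow> 'a list) \<Rightarrow> 'a list \<Rightarrow> nat" where
  "orb_len g v = card (orb g v)"

definition stab_sec :: "('a list \<Rightarrow> 'a list) \<Rightarrow> 'a list \<Rightarrow> 'a list \<Rightarrow> 'a list" where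
  "stab_sec g v = sec (g ^^ orb_len g v) v"

definition CS_group :: "'a \<Rightarrow> ('a \<Rightarrow> 'a) set \<Rightarrow> ('a list \<Rightarrow> 'a list) set \<Rightarrow> bool" where
  "CS_group z A B \<longleftrightarrow>
     subgroup A Sym_grp \<and> (\<forall>x y. \<exists>a\<in>A. a x = y)
   \<and> subgroup B Aut_grp \<and> B \<subseteq> St1
   \<and> (\<forall>b\<in>B. sec b [z] = b)
   \<and> (\<forall>b\<in>B. \<forall>x. x \<noteq> z \<longrightarrow> sec b [x] \<in> rooted ` A)
   \<and> generate Sym_grp {a. \<exists>b\<in>B. \<exists>x. x \<noteq> z \<and> sec b [x] = rooted a} = A"

definition CS_gen :: "('a \<Rightarrow> 'a) set \<Rightarrow> ('a list \<Rightarrow> 'a list) set \<Rightarrow> ('a list \<Rightarrow> 'a list) set" where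
  "CS_gen A B = generate Aut_grp (rooted ` A \<union> B)"

definition tconj :: "('a list \<Rightarrow> 'a list) \<Rightarrow> ('a list \<Rightarrow> 'a list) \<Rightarrow> 'a list \<Rightarrow> 'a list" where
  "tconj h g = h \<otimes>\<^bsub>Aut_grp\<^esub> g \<otimes>\<^bsub>Aut_grp\<^esub> inv\<^bsub>Aut_grp\<^esub> h"

text \<open>the product (^{a_0} b_0)(^{a_1} b_1)...(^{a_{n-1}} b_{n-1}) a_n\<close>
fun syl_prod :: "(('a \<Rightarrow> 'a) \<times> ('a list \<Rightarrow> 'a list)) list \<Rightarrow> ('a \<Rightarrow> 'a) \<Rightarrow> 'a list \<Rightarrow> 'a list" where
  "syl_prod [] a = rooted a"
| "syl_prod ((a', b) # ps) a = tconj (rooted a') b \<otimes>\<^bsub>Aut_grp\<^esub> syl_prod ps a"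

definition syl :: "('a \<Rightarrow> 'a) set \<Rightarrow> ('a list \<Rightarrow> 'a list) set \<Rightarrow> ('a list \<Rightarrow> 'a list) \<Rightarrow> nat" where
  "syl A B g = (LEAST n. \<exists>ps a. length ps = n \<and> set ps \<subseteq> A \<times> B \<and> a \<in> A
                              \<and> g = syl_prod ps a)"

end

theory Submission
  imports Defs
begin


definition T :: "('a \<Rightarrow> 'a) \<Rightarrow> ('a list \<Rightarrow> 'a list) \<Rightarrow> 'a list \<Rightarrow> 'a list" where
  "T a b = rooted (inv_into UNIV a) \<circ> b \<circ> rooted a"

lemma cinv: "bij c \<Longrightarrow> c \<circ> inv_into UNIV c = id"
  by (rule ext) (simp add: bij_is_surj surj_f_inv_f)
lemma invc: "bij c \<Longrightarrow> inv_into UNIV c \<circ> c = id"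
  by (rule ext) (simp add: bij_is_inj inv_f_f)

lemma rooted_id: "rooted id = id"
proof (rule ext)
  fix u :: "'a list" show "rooted id u = id u" by (cases u) auto
qed

lemma rooted_id': "rooted (\<lambda>x. x) = (\<lambda>u. u)"
  using rooted_id by (simp add: id_def)

lemma rooted_comp: "rooted p \<circ> rooted q = rooted (p \<circ> q)"
proof (rule ext)
  fix u :: "'a list" show "(rooted p \<circ> rooted q) u = rooted (p \<circ> q) u" by (cases u) auto
qed

lemma rooted_bij: "bij c \<Longrightarrow> bij (rooted c)"
proof -
  assume "bij c"
  have e1: "rooted c \<circ> rooted (inv_into UNIV c) = id"
    using \<open>bij c\<close> by (simp add: rooted_comp cinv rooted_id)
  have e2: "rooted (inv_into UNIV c) \<circ> rooted c = id"
    using \<open>bij c\<close> by (simp add: rooted_comp invc rooted_id)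
  show ?thesis by (rule o_bij[OF e2 e1])
qed

lemma rooted_tree_aut: "bij c \<Longrightarrow> rooted c \<in> tree_aut"
proof -
  assume b: "bij c"
  have "\<forall>u. length (rooted c u) = length u"
  proof
    fix u :: "'a list" show "length (rooted c u) = length u" by (cases u) auto
  qed
  moreover have "\<forall>u v. take (length u) (rooted c (u @ v)) = rooted c u"
  proof (intro allI)
    fix u v :: "'a list" show "take (length u) (rooted c (u @ v)) = rooted c u" by (cases u) auto
  qed
  ultimately show ?thesis using rooted_bij[OF b] unfolding tree_aut_def by blast
qed

lemma inv_Aut_rooted: "bij a \<Longrightarrow> inv\<^bsub>Aut_grp\<^esub> (rooted a) = rooted (inv_into UNIV a)"
proof -
  assume b: "bij a"
  have e1: "rooted a \<circ> rooted (inv_into UNIV a) = id"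
    using b by (simp add: rooted_comp cinv rooted_id)
  have e2: "rooted (inv_into UNIV a) \<circ> rooted a = id"
    using b by (simp add: rooted_comp invc rooted_id)
  have bi: "bij (inv_into UNIV a)" using b by (simp add: bij_imp_bij_inv)
  show ?thesis unfolding m_inv_def Aut_grp_def
  proof (simp, rule the_equality)
    show "rooted (inv_into UNIV a) \<in> tree_aut \<and> rooted (inv_into UNIV a) \<circ> rooted a = id \<and> rooted a \<circ> rooted (inv_into UNIV a) = id"
      using e1 e2 rooted_tree_aut[OF bi] by simp
  next
    fix y assume "y \<in> tree_aut \<and> y \<circ> rooted a = id \<and> rooted a \<circ> y = id"
    then have "y = y \<circ> (rooted a \<circ> rooted (inv_into UNIV a))" using e1 by simp
    also have "\<dots> = rooted (inv_into UNIV a)" using \<open>y \<in> tree_aut \<and> y \<circ> rooted a = id \<and> rooted a \<circ> y = id\<close>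
      by (simp add: o_assoc)
    finally show "y = rooted (inv_into UNIV a)" .
  qed
qed

lemma inv_Sym: "bij a \<Longrightarrow> inv\<^bsub>Sym_grp\<^esub> a = inv_into UNIV a"
proof -
  assume b: "bij a"
  have e1: "a \<circ> inv_into UNIV a = id" using b by (simp add: cinv)
  have e2: "inv_into UNIV a \<circ> a = id" using b by (simp add: invc)
  show ?thesis unfolding m_inv_def Sym_grp_def
  proof (simp, rule the_equality)
    show "bij (inv_into UNIV a) \<and> inv_into UNIV a \<circ> a = id \<and> a \<circ> inv_into UNIV a = id"
      using e1 e2 b by (simp add: bij_imp_bij_inv)
  next
    fix y assume h: "bij y \<and> y \<circ> a = id \<and> a \<circ> y = id"
    then have "y = y \<circ> (a \<circ> inv_into UNIV a)" using e1 by simp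
    also have "\<dots> = inv_into UNIV a" using h by (simp add: o_assoc)
    finally show "y = inv_into UNIV a" .
  qed
qed

lemma tconj_rooted: "bij a \<Longrightarrow> tconj (rooted a) b = T a b"
  unfolding tconj_def T_def by (simp add: inv_Aut_rooted) (simp add: Aut_grp_def o_assoc)

lemma syl_prod_Cons: "bij a' \<Longrightarrow> syl_prod ((a',b)#ps) a = syl_prod ps a \<circ> T a' b"
  by (simp add: tconj_rooted Aut_grp_def)

lemma T_id: "T id f = f"
  by (simp add: T_def rooted_id)

lemma T_shift: "bij a' \<Longrightarrow> bij c \<Longrightarrow> T a' b \<circ> rooted c = rooted c \<circ> T (a' \<circ> c) b"
proof -
  assume a: "bij a'" and c: "bij c"
  have "inv_into UNIV (a' \<circ> c) = inv_into UNIV c \<circ> inv_into UNIV a'"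
    using a c by (simp add: o_inv_distrib)
  then have "c \<circ> inv_into UNIV (a' \<circ> c) = inv_into UNIV a'"
  proof -
    have "c \<circ> (inv_into UNIV c \<circ> inv_into UNIV a') = (c \<circ> inv_into UNIV c) \<circ> inv_into UNIV a'"
      by (simp only: o_assoc)
    also have "\<dots> = inv_into UNIV a'" using cinv[OF c] by simp
    finally show ?thesis using \<open>inv_into UNIV (a' \<circ> c) = inv_into UNIV c \<circ> inv_into UNIV a'\<close> by simp
  qed
  then have "rooted c \<circ> rooted (inv_into UNIV (a' \<circ> c)) = rooted (inv_into UNIV a')"
    by (simp add: rooted_comp)
  then have "rooted c \<circ> T (a' \<circ> c) b = rooted (inv_into UNIV a') \<circ> b \<circ> rooted (a' \<circ> c)"
    unfolding T_def by (simp add: o_assoc)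
  moreover have "T a' b \<circ> rooted c = rooted (inv_into UNIV a') \<circ> b \<circ> rooted (a' \<circ> c)"
    unfolding T_def by (simp add: o_assoc[symmetric] rooted_comp)
  ultimately show ?thesis by simp
qed

lemma syl_prod_shift:
  "\<forall>p\<in>set ps. bij (fst p) \<Longrightarrow> bij c \<Longrightarrow>
   syl_prod ps a \<circ> rooted c = syl_prod (map (\<lambda>(a',b). (a' \<circ> c, b)) ps) (a \<circ> c)"
proof (induction ps)
  case Nil then show ?case by (simp only: syl_prod.simps list.map rooted_comp)
next
  case (Cons p ps)
  obtain a' b where p: "p = (a',b)" by (cases p)
  have ba: "bij a'" using Cons p by simp
  have bac: "bij (a' \<circ> c)" using ba Cons by (simp add: bij_comp)
  have "syl_prod (p#ps) a \<circ> rooted c = syl_prod ps a \<circ> (T a' b \<circ> rooted c)"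
    using p ba by (simp only: syl_prod_Cons o_assoc)
  also have "\<dots> = (syl_prod ps a \<circ> rooted c) \<circ> T (a' \<circ> c) b"
    using T_shift[OF ba Cons.prems(2)] by (simp add: o_assoc)
  also have "\<dots> = syl_prod (map (\<lambda>(a',b). (a' \<circ> c, b)) (p#ps)) (a \<circ> c)"
  proof -
    have IH: "syl_prod ps a \<circ> rooted c = syl_prod (map (\<lambda>(a',b). (a' \<circ> c, b)) ps) (a \<circ> c)"
    proof -
      have "\<forall>p\<in>set ps. bij (fst p)" using Cons.prems by simp
      from Cons.IH[OF this Cons.prems(2)] show ?thesis .
    qed
    show ?thesis using p bac by (simp only: IH list.map prod.case syl_prod_Cons)
  qed
  finally show ?case .
qed

lemma syl_prod_append:
  "\<forall>p\<in>set ps. bij (fst p) \<Longrightarrow> syl_prod (ps @ rs) d = syl_prod rs d \<circ> syl_prod ps id"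
proof (induction ps)
  case Nil then show ?case by (simp add: rooted_id rooted_id' comp_def)
next
  case (Cons p ps)
  obtain a' b where p: "p = (a',b)" by (cases p)
  have ba: "bij a'" using Cons p by simp
  have "syl_prod ((p # ps) @ rs) d = syl_prod (ps @ rs) d \<circ> T a' b"
    using p ba by (simp only: append_Cons syl_prod_Cons)
  also have "\<dots> = syl_prod rs d \<circ> (syl_prod ps id \<circ> T a' b)"
  proof -
    have "\<forall>p\<in>set ps. bij (fst p)" using Cons.prems by simp
    from Cons.IH[OF this] show ?thesis by (simp only: o_assoc)
  qed
  also have "\<dots> = syl_prod rs d \<circ> syl_prod (p # ps) id"
    using p ba by (simp only: syl_prod_Cons)
  finally show ?case .
qed

lemma syl_prod_split: "\<forall>p\<in>set ps. bij (fst p) \<Longrightarrow> syl_prod ps a = rooted a \<circ> syl_prod ps id"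
  using syl_prod_append[of ps "[]" a] by simp



fun compw :: "(('b \<Rightarrow> 'b) \<times> bool) list \<Rightarrow> 'b \<Rightarrow> 'b" where
  "compw [] = id"
| "compw (p # ws) = compw ws \<circ> fst p"

lemma compw_append: "compw (xs @ ys) = compw ys \<circ> compw xs"
  by (induction xs) (auto simp: o_assoc)

fun blocks :: "bool list \<Rightarrow> nat" where
  "blocks [] = 0"
| "blocks (False # bs) = blocks bs"
| "blocks [True] = 1"
| "blocks (True # True # bs) = blocks (True # bs)"
| "blocks (True # False # bs) = Suc (blocks bs)"

fun ntrue :: "bool list \<Rightarrow> nat" where
  "ntrue [] = 0"
| "ntrue (b # bs) = (if b then 1 else 0) + ntrue bs"

lemma blocks_half: "2 * blocks bs \<le> length bs + 1"
  by (induction bs rule: blocks.induct) auto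

lemma blocks_ntrue: "blocks bs \<le> ntrue bs"
  by (induction bs rule: blocks.induct) auto

lemma ntrue_append: "ntrue (xs @ ys) = ntrue xs + ntrue ys"
  by (induction xs) auto

lemma ntrue_concat: "ntrue (map snd (concat (map F js))) = sum_list (map (\<lambda>j. ntrue (map snd (F j))) js)"
  by (induction js) (auto simp: ntrue_append)

lemma orbit_inj:
  fixes f :: "'b \<Rightarrow> 'b"
  assumes fin: "finite (range (\<lambda>j. (f^^j) y))"
  shows "inj_on (\<lambda>j. (f^^j) y) {..<card (range (\<lambda>j. (f^^j) y))}"
proof (rule ccontr)
  let ?s = "\<lambda>j. (f^^j) y"
  let ?l = "card (range ?s)"
  assume "\<not> inj_on ?s {..<?l}"
  then obtain i0 j0 where h0: "i0 < ?l" "j0 < ?l" "?s i0 = ?s j0" "i0 \<noteq> j0"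
    unfolding inj_on_def by auto
  obtain i j where ij: "i < j" "j < ?l" "?s i = ?s j"
  proof (cases "i0 < j0")
    case True then show ?thesis using that h0 by blast
  next
    case False then have "j0 < i0" using h0(4) by simp
    then show ?thesis using that h0 by fastforce
  qed
  have all: "?s k \<in> ?s ` {..<j}" for k
  proof (induction k rule: less_induct)
    case (less k)
    show ?case
    proof (cases "k < j")
      case True then show ?thesis by auto
    next
      case False
      have kk: "k = (k-j) + j" using False by simp
      have "?s k = (f^^(k-j)) (?s j)" by (subst kk) (simp only: funpow_add comp_apply)
      also have "\<dots> = (f^^(k-j)) (?s i)" using ij by simp
      also have "\<dots> = ?s (k - j + i)" by (simp only: funpow_add comp_apply)
      finally show ?thesis using less[of "k - j + i"] ij False by simp
    qed
  qed
  then have "range ?s \<subseteq> ?s ` {..<j}" by blast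
  then have "?l \<le> card (?s ` {..<j})" by (simp add: card_mono)
  also have "\<dots> \<le> j" using card_image_le[of "{..<j}" ?s] by simp
  finally show False using ij by simp
qed

context
  fixes z :: 'a and A :: "('a \<Rightarrow> 'a) set" and B :: "('a list \<Rightarrow> 'a list) set"
  assumes cs: "CS_group z A B"
begin

lemma sgA: "subgroup A Sym_grp" using cs unfolding CS_group_def by blast
lemma sgB: "subgroup B Aut_grp" using cs unfolding CS_group_def by blast

lemma A_bij: "a \<in> A \<Longrightarrow> bij a"
  using subgroup.subset[OF sgA] by (auto simp: Sym_grp_def)

lemma A_id: "id \<in> A"
  using subgroup.one_closed[OF sgA] by (simp add: Sym_grp_def)

lemma A_comp: "a \<in> A \<Longrightarrow> c \<in> A \<Longrightarrow> c \<circ> a \<in> A"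
  using subgroup.m_closed[OF sgA, of a c] by (simp add: Sym_grp_def)

lemma A_inv: "a \<in> A \<Longrightarrow> inv_into UNIV a \<in> A"
  using subgroup.m_inv_closed[OF sgA, of a] inv_Sym[OF A_bij] by simp

lemma B_comp: "b1 \<in> B \<Longrightarrow> b2 \<in> B \<Longrightarrow> b2 \<circ> b1 \<in> B"
  using subgroup.m_closed[OF sgB, of b1 b2] by (simp add: Aut_grp_def)

lemma B_inv: "b \<in> B \<Longrightarrow> inv\<^bsub>Aut_grp\<^esub> b \<in> B"
  using subgroup.m_inv_closed[OF sgB] by simp

lemma B_St1: "b \<in> B \<Longrightarrow> b \<in> St1" using cs unfolding CS_group_def by blast

lemma B_apply: assumes "b \<in> B" shows "b (x # v) = x # sec b [x] v"
proof -
  have ta: "b \<in> tree_aut" and fx: "b [x] = [x]" using B_St1[OF assms] by (auto simp: St1_def)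
  have l: "length (b (x # v)) = Suc (length v)" using ta by (simp add: tree_aut_def)
  have "\<forall>u v. take (length u) (b (u @ v)) = b u" using ta by (simp add: tree_aut_def)
  then have "take (length [x]) (b ([x] @ v)) = b [x]" by blast
  then have "take 1 (b ([x] @ v)) = b [x]" by simp
  then have t: "take 1 (b (x # v)) = [x]" using fx by simp
  have "b (x # v) = take 1 (b (x # v)) @ drop 1 (b (x # v))" by simp
  also have "\<dots> = x # sec b [x] v" using t by (simp add: sec_def)
  finally show ?thesis .
qed

lemma B_sec_nil: assumes "b \<in> B" shows "sec b [x] [] = []"
proof -
  have "b [x] = [x]" using B_St1[OF assms] by (simp add: St1_def)
  then show ?thesis by (simp add: sec_def)
qed

lemma B_sec_z: "b \<in> B \<Longrightarrow> sec b [z] = b" using cs unfolding CS_group_def by blast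

lemma B_sec_other: "b \<in> B \<Longrightarrow> y \<noteq> z \<Longrightarrow> sec b [y] \<in> rooted ` A"
  using cs unfolding CS_group_def by blast

lemma ps_bij: "set ps \<subseteq> A \<times> B \<Longrightarrow> \<forall>p\<in>set ps. bij (fst p)"
  using A_bij by auto

lemma normal_form:
  assumes "g \<in> CS_gen A B"
  shows "\<exists>ps a. set ps \<subseteq> A \<times> B \<and> a \<in> A \<and> g = syl_prod ps a"
  using assms unfolding CS_gen_def
proof (induction rule: generate.induct)
  case one
  have "\<one>\<^bsub>Aut_grp\<^esub> = syl_prod [] id" by (simp add: rooted_id Aut_grp_def)
  then have "set [] \<subseteq> A \<times> B \<and> id \<in> A \<and> \<one>\<^bsub>Aut_grp\<^esub> = syl_prod [] id" using A_id by simp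
  then show ?case by (rule exI[of _ "[]", OF exI[of _ id]])
next
  case (incl h)
  then show ?case
  proof
    assume "h \<in> rooted ` A"
    then obtain a where a: "a \<in> A" "h = rooted a" by (rule imageE) simp
    then have "set [] \<subseteq> A \<times> B \<and> a \<in> A \<and> h = syl_prod [] a" by simp
    then show ?thesis by (rule exI[of _ "[]", OF exI[of _ a]])
  next
    assume hb: "h \<in> B"
    have "syl_prod [(id, h)] id = h"
      by (simp only: syl_prod_Cons[OF bij_id] T_id syl_prod.simps(1) rooted_id id_comp)
    then have "set [(id,h)] \<subseteq> A \<times> B \<and> id \<in> A \<and> h = syl_prod [(id,h)] id" using hb A_id by simp
    then show ?thesis by (rule exI[of _ "[(id,h)]", OF exI[of _ id]])
  qed
next
  case (inv h)
  then show ?case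
  proof
    assume "h \<in> rooted ` A"
    then obtain a where a: "a \<in> A" "h = rooted a" by (rule imageE) simp
    then have "inv\<^bsub>Aut_grp\<^esub> h = syl_prod [] (inv_into UNIV a)"
      by (simp add: inv_Aut_rooted A_bij)
    then have "set [] \<subseteq> A \<times> B \<and> inv_into UNIV a \<in> A \<and> inv\<^bsub>Aut_grp\<^esub> h = syl_prod [] (inv_into UNIV a)"
      using A_inv[OF a(1)] by simp
    then show ?thesis by (rule exI[of _ "[]", OF exI[of _ "inv_into UNIV a"]])
  next
    assume hb: "h \<in> B"
    let ?h = "inv\<^bsub>Aut_grp\<^esub> h"
    have "syl_prod [(id, ?h)] id = ?h"
      by (simp only: syl_prod_Cons[OF bij_id] T_id syl_prod.simps(1) rooted_id id_comp)
    then have "set [(id,?h)] \<subseteq> A \<times> B \<and> id \<in> A \<and> ?h = syl_prod [(id,?h)] id" using B_inv[OF hb] A_id by simp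
    then show ?thesis by (rule exI[of _ "[(id,?h)]", OF exI[of _ id]])
  qed
next
  case (eng h1 h2)
  from eng.IH(1) obtain ps a where 1: "set ps \<subseteq> A \<times> B" "a \<in> A" "h1 = syl_prod ps a" by (elim exE conjE)
  from eng.IH(2) obtain qs c where 2: "set qs \<subseteq> A \<times> B" "c \<in> A" "h2 = syl_prod qs c" by (elim exE conjE)
  let ?qs = "map (\<lambda>(a',b). (a' \<circ> a, b)) qs"
  have "h1 \<otimes>\<^bsub>Aut_grp\<^esub> h2 = syl_prod qs c \<circ> (rooted a \<circ> syl_prod ps id)"
  proof -
    have "h1 \<otimes>\<^bsub>Aut_grp\<^esub> h2 = syl_prod qs c \<circ> syl_prod ps a" using 1(3) 2(3) by (simp add: Aut_grp_def)
    also have "syl_prod ps a = rooted a \<circ> syl_prod ps id" by (rule syl_prod_split[OF ps_bij[OF 1(1)]])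
    finally show ?thesis .
  qed
  also have "\<dots> = syl_prod ?qs (c \<circ> a) \<circ> syl_prod ps id"
    using syl_prod_shift[OF ps_bij[OF 2(1)] A_bij[OF 1(2)]] by (simp add: o_assoc)
  also have "\<dots> = syl_prod (ps @ ?qs) (c \<circ> a)"
    using syl_prod_append[OF ps_bij[OF 1(1)]] by simp
  finally have e: "h1 \<otimes>\<^bsub>Aut_grp\<^esub> h2 = syl_prod (ps @ ?qs) (c \<circ> a)" .
  have "set ?qs \<subseteq> A \<times> B" using 2(1) 1(2) A_comp by auto
  then have "set (ps @ ?qs) \<subseteq> A \<times> B" using 1 by auto
  then have "set (ps @ ?qs) \<subseteq> A \<times> B \<and> c \<circ> a \<in> A \<and> h1 \<otimes>\<^bsub>Aut_grp\<^esub> h2 = syl_prod (ps @ ?qs) (c \<circ> a)"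
    using e A_comp[OF 1(2) 2(2)] by simp
  then show ?case by (rule exI[of _ "ps @ ?qs", OF exI[of _ "c \<circ> a"]])
qed

definition items :: "(('a \<Rightarrow> 'a) \<times> ('a list \<Rightarrow> 'a list)) list \<Rightarrow> 'a \<Rightarrow> (('a list \<Rightarrow> 'a list) \<times> bool) list" where
  "items ps y = map (\<lambda>(a',b). (sec b [a' y], a' y = z)) ps"

definition valid :: "(('a list \<Rightarrow> 'a list) \<times> bool) list \<Rightarrow> bool" where
  "valid ws \<longleftrightarrow> (\<forall>p\<in>set ws. (snd p \<longrightarrow> fst p \<in> B) \<and> (\<not> snd p \<longrightarrow> fst p \<in> rooted ` A))"

lemma valid_items: "set ps \<subseteq> A \<times> B \<Longrightarrow> valid (items ps y)"
  unfolding valid_def items_def using B_sec_z B_sec_other by auto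

lemma valid_concat: "(\<And>j. j \<in> set js \<Longrightarrow> valid (F j)) \<Longrightarrow> valid (concat (map F js))"
  unfolding valid_def by auto

lemma items_nil: "set ps \<subseteq> A \<times> B \<Longrightarrow> compw (items ps y) [] = []"
  by (induction ps) (auto simp: items_def B_sec_nil)

lemma T_apply: "bij a' \<Longrightarrow> b \<in> B \<Longrightarrow> T a' b (x # v) = x # sec b [a' x] v"
  by (simp add: T_def B_apply bij_is_inj inv_f_f)

lemma syl_prod_apply:
  "set ps \<subseteq> A \<times> B \<Longrightarrow> syl_prod ps a (x # v) = a x # compw (items ps x) v"
proof (induction ps arbitrary: v)
  case Nil then show ?case by (simp add: items_def)
next
  case (Cons p ps)
  obtain a' b where p: "p = (a',b)" by (cases p)
  have ab: "a' \<in> A" "b \<in> B" using Cons p by auto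
  have "syl_prod (p # ps) a (x # v) = syl_prod ps a (T a' b (x # v))"
    using p A_bij[OF ab(1)] by (simp only: syl_prod_Cons comp_apply)
  also have "\<dots> = a x # compw (items ps x) (sec b [a' x] v)"
    using T_apply[OF A_bij[OF ab(1)] ab(2)] Cons by simp
  finally show ?case using p by (simp add: items_def)
qed

lemma RL:
  "valid ws \<Longrightarrow> \<exists>ps c. set ps \<subseteq> A \<times> B \<and> c \<in> A \<and> compw ws = syl_prod ps c
                 \<and> length ps \<le> blocks (map snd ws)"
proof (induction "length ws" arbitrary: ws rule: less_induct)
  case less
  show ?case
  proof (cases ws)
    case Nil
    have "compw ws = syl_prod [] id" using Nil by (simp only: compw.simps syl_prod.simps rooted_id)
    then have "set [] \<subseteq> A \<times> B \<and> id \<in> A \<and> compw ws = syl_prod [] id \<and> length [] \<le> blocks (map snd ws)" using A_id by simp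
    then show ?thesis by blast
  next
    case (Cons p r)
    obtain f t where p: "p = (f, t)" by (cases p)
    have vr: "valid r" using less.prems Cons by (simp add: valid_def)
    show ?thesis
    proof (cases t)
      case False
      then obtain c0 where c0: "c0 \<in> A" "f = rooted c0"
        using less.prems Cons p by (auto simp: valid_def)
      obtain qs c where q: "set qs \<subseteq> A \<times> B" "c \<in> A" "compw r = syl_prod qs c"
          "length qs \<le> blocks (map snd r)"
        using less.hyps[of r] vr Cons by auto
      let ?qs = "map (\<lambda>(a',b). (a' \<circ> c0, b)) qs"
      have "compw ws = syl_prod ?qs (c \<circ> c0)"
        using Cons p c0 q syl_prod_shift[OF ps_bij[OF q(1)] A_bij[OF c0(1)]] by simp
      moreover have "set ?qs \<subseteq> A \<times> B" using q(1) c0(1) A_comp by auto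
      moreover have "length ?qs \<le> blocks (map snd ws)" using q(4) Cons p False by simp
      ultimately show ?thesis using A_comp[OF c0(1) q(2)] by blast
    next
      case True
      have fB: "f \<in> B" using less.prems Cons p True by (auto simp: valid_def)
      show ?thesis
      proof (cases r)
        case Nil
        have "syl_prod [(id, f)] id = f"
          by (simp only: syl_prod_Cons[OF bij_id] T_id syl_prod.simps(1) rooted_id id_comp)
        then have "compw ws = syl_prod [(id, f)] id" using Cons Nil p by simp
        moreover have "length [(id,f)] \<le> blocks (map snd ws)" using Cons Nil p True by simp
        ultimately have "set [(id,f)] \<subseteq> A \<times> B \<and> id \<in> A \<and> compw ws = syl_prod [(id,f)] id \<and> length [(id,f)] \<le> blocks (map snd ws)" using fB A_id by simp
        then show ?thesis by blast
      next
        case (Cons q r')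
        obtain f2 t2 where q: "q = (f2, t2)" by (cases q)
        show ?thesis
        proof (cases t2)
          case True2: True
          have f2B: "f2 \<in> B" using vr Cons q True2 by (auto simp: valid_def)
          let ?w = "(f2 \<circ> f, True) # r'"
          have vw: "valid ?w" using vr Cons B_comp[OF fB f2B] by (auto simp: valid_def)
          have lw: "length ?w < length ws" using \<open>ws = p # r\<close> Cons by simp
          obtain qs c where qq: "set qs \<subseteq> A \<times> B" "c \<in> A" "compw ?w = syl_prod qs c"
              "length qs \<le> blocks (map snd ?w)"
            using less.hyps[OF lw vw] by blast
          have "compw ws = compw ?w" using \<open>ws = p # r\<close> Cons p q by (simp add: o_assoc)
          moreover have "blocks (map snd ?w) = blocks (map snd ws)"
            using \<open>ws = p # r\<close> Cons p q True True2 by simp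
          ultimately show ?thesis using qq by auto
        next
          case False2: False
          have lw: "length r < length ws" using \<open>ws = p # r\<close> by simp
          obtain qs c where qq: "set qs \<subseteq> A \<times> B" "c \<in> A" "compw r = syl_prod qs c"
              "length qs \<le> blocks (map snd r)"
            using less.hyps[OF lw vr] by blast
          have "compw ws = syl_prod ((id, f) # qs) c"
            using \<open>ws = p # r\<close> p qq(3) by (simp only: compw.simps fst_conv syl_prod_Cons[OF bij_id] T_id)
          moreover have "length ((id, f) # qs) \<le> blocks (map snd ws)"
            using \<open>ws = p # r\<close> Cons p q True False2 qq(4) by simp
          moreover have "set ((id, f) # qs) \<subseteq> A \<times> B" using qq(1) fB A_id by auto
          ultimately show ?thesis using qq(2) by blast
        qed
      qed
    qed
  qed
qed

lemma syl_le: "set ps \<subseteq> A \<times> B \<Longrightarrow> c \<in> A \<Longrightarrow> h = syl_prod ps c \<Longrightarrow> syl A B h \<le> length ps"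
  unfolding syl_def by (rule Least_le) blast

lemma syl_compw: "valid ws \<Longrightarrow> syl A B (compw ws) \<le> blocks (map snd ws)"
  using RL syl_le le_trans by blast

lemma cnt_sum:
  assumes "finite S" shows "set ps \<subseteq> A \<times> B \<Longrightarrow> (\<Sum>y\<in>S. ntrue (map snd (items ps y))) \<le> length ps"
proof (induction ps)
  case Nil then show ?case by (simp add: items_def)
next
  case (Cons p ps)
  obtain a' b where p: "p = (a',b)" by (cases p)
  have ba: "bij a'" using Cons p A_bij by auto
  have eq: "(a' y = z) = (y = inv_into UNIV a' z)" for y
    using ba bij_inv_eq_iff by fastforce
  have "(\<Sum>y\<in>S. (if a' y = z then 1 else 0)::nat) = (\<Sum>y\<in>S. if y = inv_into UNIV a' z then 1 else 0)"
    by (simp only: eq)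
  also have "\<dots> \<le> 1" using assms by simp
  finally have s1: "(\<Sum>y\<in>S. (if a' y = z then 1 else 0)::nat) \<le> 1" .
  have "(\<Sum>y\<in>S. ntrue (map snd (items (p # ps) y)))
      = (\<Sum>y\<in>S. (if a' y = z then 1 else 0)) + (\<Sum>y\<in>S. ntrue (map snd (items ps y)))"
    using p by (simp add: items_def sum.distrib)
  also have "\<dots> \<le> 1 + length ps" using s1 Cons by (intro add_mono) auto
  finally show ?case by simp
qed


lemma cnt_nz: "ntrue (map snd (items ps y)) \<noteq> 0 \<Longrightarrow> \<exists>p\<in>set ps. fst p y = z"
  by (induction ps) (auto simp: items_def split: if_splits)

lemma compw_nil_gen: "(\<forall>p\<in>set ws. fst p [] = []) \<Longrightarrow> compw ws [] = []"
  by (induction ws) auto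

lemma items_elem_nil: "set ps \<subseteq> A \<times> B \<Longrightarrow> p \<in> set (items ps y) \<Longrightarrow> fst p [] = []"
  unfolding items_def using B_sec_nil by auto

lemma iter:
  assumes "set ps \<subseteq> A \<times> B"
  shows "(syl_prod ps a ^^ k) (x # v) = (a^^k) x # compw (concat (map (\<lambda>j. items ps ((a^^j) x)) [0..<k])) v"
proof (induction k arbitrary: v)
  case 0 then show ?case by simp
next
  case (Suc k)
  have "(syl_prod ps a ^^ Suc k) (x # v) = syl_prod ps a ((syl_prod ps a ^^ k) (x # v))" by simp
  also have "\<dots> = a ((a^^k) x) # compw (items ps ((a^^k) x)) (compw (concat (map (\<lambda>j. items ps ((a^^j) x)) [0..<k])) v)"
    using Suc syl_prod_apply[OF assms] by simp
  finally show ?case by (simp add: compw_append)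
qed

lemma per: assumes "f ^^ m = id" shows "f ^^ k = f ^^ (k mod m)"
proof -
  have e: "k = k mod m + m * (k div m)" by simp
  have "f ^^ k = f ^^ (k mod m + m * (k div m))" using e by (rule arg_cong)
  also have "\<dots> = f ^^ (k mod m) \<circ> (f ^^ m) ^^ (k div m)" by (simp only: funpow_add funpow_mult)
  finally have "f ^^ k = f ^^ (k mod m) \<circ> (f ^^ m) ^^ (k div m)" .
  then show ?thesis using assms by simp
qed

lemma main_ctx:
  assumes g: "g \<in> CS_gen A B"
  shows "(\<forall>x. real (syl A B (sec g [x])) \<le> (real (syl A B g) + 1) / 2)
       \<and> finite {x. syl A B (sec g [x]) \<noteq> 0}
       \<and> (\<Sum>x\<in>{x. syl A B (sec g [x]) \<noteq> 0}. syl A B (sec g [x])) \<le> syl A B g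
       \<and> (\<forall>x. finite (orb g [x]) \<longrightarrow> syl A B (stab_sec g [x]) \<le> syl A B g)
       \<and> ((\<exists>n>0. top_perm g ^^ n = id) \<longrightarrow> finite {x. stab_sec g [x] \<notin> rooted ` A})"
proof -
  let ?P = "\<lambda>n. \<exists>ps a. length ps = n \<and> set ps \<subseteq> A \<times> B \<and> a \<in> A \<and> g = syl_prod ps a"
  have "\<exists>n. ?P n" using normal_form[OF g] by blast
  then have "?P (syl A B g)" unfolding syl_def by (rule LeastI_ex)
  then obtain ps a where ps: "length ps = syl A B g" "set ps \<subseteq> A \<times> B" "a \<in> A" "g = syl_prod ps a"
    by blast
  define n where "n = syl A B g"
  define cntf where "cntf y = ntrue (map snd (items ps y))" for y
  have secg: "sec g [x] = compw (items ps x)" for x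
    by (rule ext) (simp add: sec_def ps(4) syl_prod_apply[OF ps(2)])
  have vi: "valid (items ps x)" for x using valid_items[OF ps(2)] .
  have len: "length (map snd (items ps x)) = n" for x using ps(1) n_def by (simp add: items_def)
  have sb: "syl A B (sec g [x]) \<le> blocks (map snd (items ps x))" for x
    using syl_compw[OF vi] secg by simp
  have sc: "syl A B (sec g [x]) \<le> cntf x" for x
    using le_trans[OF sb blocks_ntrue] by (simp add: cntf_def)
  have p1: "\<forall>x. real (syl A B (sec g [x])) \<le> (real (syl A B g) + 1) / 2"
  proof
    fix x
    have "2 * syl A B (sec g [x]) \<le> n + 1" using sb[of x] blocks_half[of "map snd (items ps x)"] len[of x]
      by simp
    then have "2 * real (syl A B (sec g [x])) \<le> real n + 1" by linarith
    then show "real (syl A B (sec g [x])) \<le> (real (syl A B g) + 1) / 2" using n_def by simp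
  qed
  let ?Z = "(\<lambda>p. inv_into UNIV (fst p) z) ` set ps"
  have finZ: "finite ?Z" by simp
  have cntZ: "cntf y \<noteq> 0 \<Longrightarrow> y \<in> ?Z" for y
  proof -
    assume "cntf y \<noteq> 0"
    then have "ntrue (map snd (items ps y)) \<noteq> 0" by (simp add: cntf_def)
    then obtain p where p: "p \<in> set ps" "fst p y = z" using cnt_nz[of ps y] by blast
    have "bij (fst p)" using p(1) ps(2) A_bij by auto
    then have "y = inv_into UNIV (fst p) z" using inv_f_f[OF bij_is_inj[OF \<open>bij (fst p)\<close>], of y] p(2) by simp
    then show "y \<in> ?Z" using p(1) by blast
  qed
  let ?S = "{x. syl A B (sec g [x]) \<noteq> 0}"
  have SZ: "?S \<subseteq> ?Z"
  proof
    fix x assume "x \<in> ?S"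
    then have "syl A B (sec g [x]) \<noteq> 0" by simp
    then have "cntf x \<noteq> 0" using sc[of x] by simp
    then show "x \<in> ?Z" by (rule cntZ)
  qed
  have finS: "finite ?S" using finite_subset[OF SZ finZ] .
  have p2: "(\<Sum>x\<in>?S. syl A B (sec g [x])) \<le> syl A B g"
  proof -
    have "(\<Sum>x\<in>?S. syl A B (sec g [x])) \<le> (\<Sum>x\<in>?S. cntf x)" by (rule sum_mono) (rule sc)
    also have "\<dots> \<le> length ps" unfolding cntf_def by (rule cnt_sum[OF finS ps(2)])
    finally show ?thesis using ps(1) by simp
  qed
  define F :: "'a \<Rightarrow> nat \<Rightarrow> _" where "F = (\<lambda>x j. items ps ((a^^j) x))"
  have gj: "(g ^^ j) [x] = [(a^^j) x]" for j x
  proof -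
    have "(g ^^ j) [x] = (a^^j) x # compw (concat (map (F x) [0..<j])) []"
      using iter[OF ps(2), where k=j and x=x and v="[]" and a=a] ps(4) F_def by simp
    moreover have "compw (concat (map (F x) [0..<j])) [] = []"
      by (rule compw_nil_gen) (auto simp: F_def dest: items_elem_nil[OF ps(2)])
    ultimately show ?thesis by simp
  qed
  have stab: "stab_sec g [x] = compw (concat (map (F x) [0..<orb_len g [x]]))" for x
    by (rule ext) (simp add: stab_sec_def sec_def ps(4) iter[OF ps(2)] F_def)
  have vc: "valid (concat (map (F x) js))" for x js
    by (rule valid_concat) (simp add: F_def vi)
  have stab_le: "syl A B (stab_sec g [x]) \<le> (\<Sum>j\<in>{..<orb_len g [x]}. cntf ((a^^j) x))" for x
  proof -
    have "syl A B (stab_sec g [x]) \<le> blocks (map snd (concat (map (F x) [0..<orb_len g [x]])))"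
      using syl_compw[OF vc] stab by simp
    also have "\<dots> \<le> ntrue (map snd (concat (map (F x) [0..<orb_len g [x]])))" by (rule blocks_ntrue)
    also have "\<dots> = (\<Sum>j\<in>{..<orb_len g [x]}. cntf ((a^^j) x))"
      by (simp add: ntrue_concat F_def cntf_def sum_set_upt_conv_sum_list_nat[symmetric] atLeast0LessThan)
    finally show ?thesis .
  qed
  have p3: "\<forall>x. finite (orb g [x]) \<longrightarrow> syl A B (stab_sec g [x]) \<le> syl A B g"
  proof (intro allI impI)
    fix x assume fo: "finite (orb g [x])"
    have oe: "orb g [x] = range (\<lambda>j. (g^^j) [x])" unfolding orb_def by auto
    let ?l = "orb_len g [x]"
    have "inj_on (\<lambda>j. (g^^j) [x]) {..<?l}"
      using orbit_inj[of g "[x]"] fo oe by (simp add: orb_len_def)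
    then have inj: "inj_on (\<lambda>j. (a^^j) x) {..<?l}" by (simp add: gj inj_on_def)
    have "syl A B (stab_sec g [x]) \<le> (\<Sum>j\<in>{..<?l}. cntf ((a^^j) x))" by (rule stab_le)
    also have "\<dots> = (\<Sum>y\<in>(\<lambda>j. (a^^j) x) ` {..<?l}. cntf y)"
      using sum.reindex[OF inj, of cntf] by simp
    also have "\<dots> \<le> length ps" unfolding cntf_def by (rule cnt_sum[OF _ ps(2)]) simp
    finally show "syl A B (stab_sec g [x]) \<le> syl A B g" using ps(1) by simp
  qed
  have p4: "(\<exists>m>0. top_perm g ^^ m = id) \<longrightarrow> finite {x. stab_sec g [x] \<notin> rooted ` A}"
  proof
    assume "\<exists>m>0. top_perm g ^^ m = id"
    then obtain m where m: "m > 0" "top_perm g ^^ m = id" by blast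
    have "top_perm g = a"
      by (rule ext) (simp add: top_perm_def ps(4) syl_prod_apply[OF ps(2)])
    then have am: "a ^^ m = id" using m by simp
    have "{x. stab_sec g [x] \<notin> rooted ` A} \<subseteq> (\<lambda>(k,y). (a^^k) y) ` ({..<m} \<times> ?Z)"
    proof
      fix x assume "x \<in> {x. stab_sec g [x] \<notin> rooted ` A}"
      then have bad: "stab_sec g [x] \<notin> rooted ` A" by simp
      have "\<exists>j. cntf ((a^^j) x) \<noteq> 0"
      proof (rule ccontr)
        assume "\<not> (\<exists>j. cntf ((a^^j) x) \<noteq> 0)"
        then have "ntrue (map snd (concat (map (F x) [0..<orb_len g [x]]))) = 0"
          by (simp add: ntrue_concat F_def cntf_def)
        then have "blocks (map snd (concat (map (F x) [0..<orb_len g [x]]))) = 0"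
          using blocks_ntrue[of "map snd (concat (map (F x) [0..<orb_len g [x]]))"] by simp
        moreover from RL[OF vc[of x "[0..<orb_len g [x]]"]] obtain qs c where qc: "set qs \<subseteq> A \<times> B" "c \<in> A"
            "compw (concat (map (F x) [0..<orb_len g [x]])) = syl_prod qs c"
            "length qs \<le> blocks (map snd (concat (map (F x) [0..<orb_len g [x]])))"
          by (elim exE conjE)
        ultimately have "qs = []" by simp
        then have "stab_sec g [x] = rooted c" using stab qc(3) by simp
        then show False using bad qc(2) by blast
      qed
      then obtain j where "cntf ((a^^j) x) \<noteq> 0" by blast
      then have yZ: "(a^^j) x \<in> ?Z" by (rule cntZ)
      have "(a^^((m - 1) * j)) ((a^^j) x) = (a^^((m - 1) * j + j)) x" by (simp add: funpow_add)
      also have "(m - 1) * j + j = m * j" using m(1) by (cases m) auto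
      also have "(a^^(m * j)) x = x" by (simp add: funpow_mult[symmetric] am)
      finally have "(a^^((m - 1) * j)) ((a^^j) x) = x" .
      then have "x = (a^^(((m - 1) * j) mod m)) ((a^^j) x)" using per[OF am, of "(m - 1) * j"] by simp
      moreover have "((m - 1) * j) mod m < m" using m(1) by simp
      ultimately show "x \<in> (\<lambda>(k,y). (a^^k) y) ` ({..<m} \<times> ?Z)" using yZ by force
    qed
    moreover have "finite ((\<lambda>(k,y). (a^^k) y) ` ({..<m} \<times> ?Z))" by simp
    ultimately show "finite {x. stab_sec g [x] \<notin> rooted ` A}" by (rule finite_subset)
  qed
  show ?thesis using p1 finS p2 p3 p4 by blast
qed

end


theorem mainTheorem2:
  fixes z :: 'a and A :: "('a \<Rightarrow> 'a) set" and B :: "('a list \<Rightarrow> 'a list) set"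
    and g :: "'a list \<Rightarrow> 'a list"
  assumes "CS_group z A B" and "g \<in> CS_gen A B"
  shows "(\<forall>x. real (syl A B (sec g [x])) \<le> (real (syl A B g) + 1) / 2)
       \<and> finite {x. syl A B (sec g [x]) \<noteq> 0}
       \<and> (\<Sum>x\<in>{x. syl A B (sec g [x]) \<noteq> 0}. syl A B (sec g [x])) \<le> syl A B g
       \<and> (\<forall>x. finite (orb g [x]) \<longrightarrow> syl A B (stab_sec g [x]) \<le> syl A B g)
       \<and> ((\<exists>n>0. top_perm g ^^ n = id) \<longrightarrow> finite {x. stab_sec g [x] \<notin> rooted ` A})"
    using main_ctx[OF assms(1) assms(2)] .

end
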